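(* Let $P$ be a finite poset with labeling $\omega:P\to\{1,\dots,p\}$ such that $P$ is $\omega$-consistent with rank function $\rho$, and such that $\omega(x)<\omega(y)$ whenever $\rho(x)<\rho(y)$. Then the Jordan–Hölder set of $(P,\omega)$ is uniquely decomposed as the disjoint union $$\mathcal{L}(P,\omega)=\bigsqcup_{Q}\mathcal{L}(Q,\omega),$$ where the union is over all saturated $\omega$-consistent posets $Q$ that extend $P$ and have the same rank function $\rho$ as $(P,\omega)$.
   Context: Write $x\prec y$ if $y$ covers $x$, $E(P)$ the set of covering pairs. A labeling $\omega$ induces $\epsilon:E(P)\to\{-1,1\}$, $\epsilon(x,y)=1$ if $\omega(x)<\omega(y)$ and $-1$ otherwise. $P$ is $\omega$-consistent if each principal ideal $\Lambda_z=\{w\le z\}$ has the property that $\sum\epsilon(x_{i-1},x_i)$ is the same over all its maximal chains $x_0\prec\cdots\prec x_n$; this common value is $\rho(z)$ (the rank function). The Jordan–Hölder set $\mathcal{L}(P,\omega)$ is the set of permutations $\omega(x_1)\omega(x_2)\cdots\omega(x_p)$ with $x_1,\dots,x_p$ a linear extension of $P$. A poset $Q$ on the same underlying set extends $P$ if $x<_Q y$ whenever $x<_P y$. An $\omega$-consistent poset $Q$ is saturated if any $x,y$ with $|\rho_Q(x)-\rho_Q(y)|=1$ are comparable in $Q$. *)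

theory Defs
  imports Main
begin

definition poset_on :: "'a set \<Rightarrow> ('a \<Rightarrow> 'a \<Rightarrow> bool) \<Rightarrow> bool" where
  "poset_on X le \<longleftrightarrow>
     (\<forall>x y. le x y \<longrightarrow> x \<in> X \<and> y \<in> X) \<and>
     (\<forall>x\<in>X. le x x) \<and>
     (\<forall>x y. le x y \<and> le y x \<longrightarrow> x = y) \<and>
     (\<forall>x y z. le x y \<and> le y z \<longrightarrow> le x z)"

definition less_rel :: "('a \<Rightarrow> 'a \<Rightarrow> bool) \<Rightarrow> 'a \<Rightarrow> 'a \<Rightarrow> bool" where
  "less_rel le x y \<longleftrightarrow> le x y \<and> x \<noteq> y"

definition covers :: "'a set \<Rightarrow> ('a \<Rightarrow> 'a \<Rightarrow> bool) \<Rightarrow> 'a \<Rightarrow> 'a \<Rightarrow> bool" where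
  "covers X le x y \<longleftrightarrow> x \<in> X \<and> y \<in> X \<and> less_rel le x y \<and>
     \<not> (\<exists>z\<in>X. less_rel le x z \<and> less_rel le z y)"

definition eps :: "('a \<Rightarrow> nat) \<Rightarrow> 'a \<Rightarrow> 'a \<Rightarrow> int" where
  "eps \<omega> x y = (if \<omega> x < \<omega> y then 1 else -1)"

definition max_chain :: "'a set \<Rightarrow> ('a \<Rightarrow> 'a \<Rightarrow> bool) \<Rightarrow> 'a \<Rightarrow> 'a list \<Rightarrow> bool" where
  "max_chain X le z cs \<longleftrightarrow> cs \<noteq> [] \<and> last cs = z \<and> hd cs \<in> X \<and>
     \<not> (\<exists>w\<in>X. less_rel le w (hd cs)) \<and>
     (\<forall>i. Suc i < length cs \<longrightarrow> covers X le (cs ! i) (cs ! Suc i))"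

definition chain_sum :: "('a \<Rightarrow> nat) \<Rightarrow> 'a list \<Rightarrow> int" where
  "chain_sum \<omega> cs = (\<Sum>i<length cs - 1. eps \<omega> (cs ! i) (cs ! Suc i))"

definition consistent :: "'a set \<Rightarrow> ('a \<Rightarrow> 'a \<Rightarrow> bool) \<Rightarrow> ('a \<Rightarrow> nat) \<Rightarrow> bool" where
  "consistent X le \<omega> \<longleftrightarrow> (\<forall>z\<in>X. \<forall>c1 c2. max_chain X le z c1 \<and> max_chain X le z c2
      \<longrightarrow> chain_sum \<omega> c1 = chain_sum \<omega> c2)"

definition rank :: "'a set \<Rightarrow> ('a \<Rightarrow> 'a \<Rightarrow> bool) \<Rightarrow> ('a \<Rightarrow> nat) \<Rightarrow> 'a \<Rightarrow> int" where
  "rank X le \<omega> z = (THE r. \<exists>c. max_chain X le z c \<and> chain_sum \<omega> c = r)"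

definition linear_extension :: "'a set \<Rightarrow> ('a \<Rightarrow> 'a \<Rightarrow> bool) \<Rightarrow> 'a list \<Rightarrow> bool" where
  "linear_extension X le xs \<longleftrightarrow> distinct xs \<and> set xs = X \<and>
     (\<forall>i j. i < length xs \<and> j < length xs \<and> less_rel le (xs ! i) (xs ! j) \<longrightarrow> i < j)"

definition jordan_hoelder :: "'a set \<Rightarrow> ('a \<Rightarrow> 'a \<Rightarrow> bool) \<Rightarrow> ('a \<Rightarrow> nat) \<Rightarrow> nat list set" where
  "jordan_hoelder X le \<omega> = {map \<omega> xs | xs. linear_extension X le xs}"

definition extends :: "('a \<Rightarrow> 'a \<Rightarrow> bool) \<Rightarrow> ('a \<Rightarrow> 'a \<Rightarrow> bool) \<Rightarrow> bool" where
  "extends Q P \<longleftrightarrow> (\<forall>x y. less_rel P x y \<longrightarrow> less_rel Q x y)"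

definition saturated :: "'a set \<Rightarrow> ('a \<Rightarrow> 'a \<Rightarrow> bool) \<Rightarrow> ('a \<Rightarrow> nat) \<Rightarrow> bool" where
  "saturated X Q \<omega> \<longleftrightarrow> consistent X Q \<omega> \<and>
     (\<forall>x\<in>X. \<forall>y\<in>X. \<bar>rank X Q \<omega> x - rank X Q \<omega> y\<bar> = 1 \<longrightarrow> Q x y \<or> Q y x)"

end

theory Submission
  imports Defs
begin

lemma less_trans':
  assumes "poset_on X le" "less_rel le a b" "less_rel le b c"
  shows "less_rel le a c"
  using assms unfolding poset_on_def less_rel_def by blast

lemma less_mem:
  assumes "poset_on X le" "less_rel le a b"
  shows "a \<in> X" "b \<in> X"
  using assms unfolding poset_on_def less_rel_def by blast+

lemma tranclp_mono_imp:
  assumes "R\<^sup>+\<^sup>+ x y" "\<And>a b. R a b \<Longrightarrow> S a b"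
  shows "S\<^sup>+\<^sup>+ x y"
  using assms(1)
proof (induction rule: tranclp_induct)
  case (base y) then show ?case using assms(2) by blast
next
  case (step y z) then show ?case using assms(2) by (meson tranclp.trancl_into_trancl)
qed

lemma cover_trancl:
  assumes P: "poset_on X le" and F: "finite X"
  shows "card {z\<in>X. less_rel le x z \<and> less_rel le z y} = n \<Longrightarrow> less_rel le x y
     \<Longrightarrow> (covers X le)\<^sup>+\<^sup>+ x y"
proof (induction n arbitrary: x y rule: less_induct)
  case (less n)
  show ?case
  proof (cases "\<exists>z\<in>X. less_rel le x z \<and> less_rel le z y")
    case False
    have "x \<in> X" "y \<in> X" using less.prems(2) less_mem[OF P] by blast+
    then have "covers X le x y" using False less.prems(2) unfolding covers_def by blast
    then show ?thesis by blast
  next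
    case True
    then obtain z where z: "z \<in> X" "less_rel le x z" "less_rel le z y" by blast
    let ?I = "\<lambda>a b. {w\<in>X. less_rel le a w \<and> less_rel le w b}"
    have fin: "finite (?I x y)" using F by simp
    have sub1: "?I x z \<subset> ?I x y"
    proof -
      have "?I x z \<subseteq> ?I x y" using less_trans'[OF P] z by blast
      moreover have "z \<notin> ?I x z" unfolding less_rel_def by blast
      moreover have "z \<in> ?I x y" using z by blast
      ultimately show ?thesis by blast
    qed
    have sub2: "?I z y \<subset> ?I x y"
    proof -
      have "?I z y \<subseteq> ?I x y" using less_trans'[OF P] z by blast
      moreover have "z \<notin> ?I z y" unfolding less_rel_def by blast
      moreover have "z \<in> ?I x y" using z by blast
      ultimately show ?thesis by blast
    qed
    have c1: "card (?I x z) < n" using psubset_card_mono[OF fin sub1] less.prems(1) by auto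
    have c2: "card (?I z y) < n" using psubset_card_mono[OF fin sub2] less.prems(1) by auto
    have "(covers X le)\<^sup>+\<^sup>+ x z" using less.IH[OF c1 refl z(2)] .
    moreover have "(covers X le)\<^sup>+\<^sup>+ z y" using less.IH[OF c2 refl z(3)] .
    ultimately show ?thesis by (rule tranclp_trans)
  qed
qed

lemma max_chain_snoc:
  assumes "max_chain X le x cs" "covers X le x y"
  shows "max_chain X le y (cs @ [y])"
proof -
  have ne: "cs \<noteq> []" and l: "last cs = x" using assms(1) unfolding max_chain_def by auto
  have "\<forall>i. Suc i < length (cs @ [y]) \<longrightarrow> covers X le ((cs @ [y]) ! i) ((cs @ [y]) ! Suc i)"
  proof (intro allI impI)
    fix i assume i: "Suc i < length (cs @ [y])"
    show "covers X le ((cs @ [y]) ! i) ((cs @ [y]) ! Suc i)"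
    proof (cases "Suc i < length cs")
      case True
      then show ?thesis using assms(1) unfolding max_chain_def by (auto simp: nth_append)
    next
      case False
      then have "i = length cs - 1" using i by auto
      then have "(cs @ [y]) ! i = x" "(cs @ [y]) ! Suc i = y" using ne l
        by (auto simp: nth_append last_conv_nth)
      then show ?thesis using assms(2) by simp
    qed
  qed
  then show ?thesis using assms(1) ne unfolding max_chain_def by auto
qed

lemma chain_sum_snoc:
  assumes "cs \<noteq> []"
  shows "chain_sum \<omega> (cs @ [y]) = chain_sum \<omega> cs + eps \<omega> (last cs) y"
proof -
  obtain m where m: "length cs = Suc m" using assms by (cases cs) auto
  have "chain_sum \<omega> (cs @ [y]) = (\<Sum>i<Suc m. eps \<omega> ((cs@[y]) ! i) ((cs@[y]) ! Suc i))"
    unfolding chain_sum_def using m by simp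
  also have "\<dots> = (\<Sum>i<m. eps \<omega> ((cs@[y]) ! i) ((cs@[y]) ! Suc i)) + eps \<omega> (cs ! m) y"
    using m by (simp add: nth_append)
  also have "(\<Sum>i<m. eps \<omega> ((cs@[y]) ! i) ((cs@[y]) ! Suc i)) = chain_sum \<omega> cs"
    unfolding chain_sum_def using m by (auto simp: nth_append intro!: sum.cong)
  finally show ?thesis using m assms by (simp add: last_conv_nth)
qed

lemma max_chain_exists:
  assumes P: "poset_on X le" and F: "finite X"
  shows "card {w\<in>X. less_rel le w x} = n \<Longrightarrow> x \<in> X \<Longrightarrow> \<exists>cs. max_chain X le x cs"
proof (induction n arbitrary: x rule: less_induct)
  case (less n)
  show ?case
  proof (cases "\<exists>w\<in>X. less_rel le w x")
    case False
    then have "max_chain X le x [x]" using less.prems unfolding max_chain_def by auto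
    then show ?thesis by blast
  next
    case True
    then obtain w where "w \<in> X" "less_rel le w x" by blast
    then have "(covers X le)\<^sup>+\<^sup>+ w x" using cover_trancl[OF P F refl] by blast
    then obtain y where y: "covers X le y x" using tranclp.cases by metis
    have yX: "y \<in> X" and yx: "less_rel le y x" using y unfolding covers_def by auto
    let ?B = "\<lambda>a. {w\<in>X. less_rel le w a}"
    have sub: "?B y \<subset> ?B x"
    proof -
      have "?B y \<subseteq> ?B x" using less_trans'[OF P] yx by blast
      moreover have "y \<notin> ?B y" unfolding less_rel_def by blast
      moreover have "y \<in> ?B x" using yx yX by blast
      ultimately show ?thesis by blast
    qed
    have "card (?B y) < n" using psubset_card_mono[OF _ sub] F less.prems(1) by auto
    then obtain cs where "max_chain X le y cs" using less.IH yX by blast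
    then have "max_chain X le x (cs @ [x])" by (rule max_chain_snoc[OF _ y])
    then show ?thesis by blast
  qed
qed

lemma max_chain_ex:
  assumes "poset_on X le" "finite X" "x \<in> X"
  shows "\<exists>cs. max_chain X le x cs"
  using max_chain_exists[OF assms(1,2) refl assms(3)] .

lemma rank_eq:
  assumes "consistent X le \<omega>" "z \<in> X" "max_chain X le z cs"
  shows "rank X le \<omega> z = chain_sum \<omega> cs"
  unfolding rank_def
proof (rule the_equality)
  show "\<exists>c. max_chain X le z c \<and> chain_sum \<omega> c = chain_sum \<omega> cs" using assms(3) by blast
next
  fix r assume "\<exists>c. max_chain X le z c \<and> chain_sum \<omega> c = r"
  then show "r = chain_sum \<omega> cs" using assms unfolding consistent_def by metis
qed

lemma cover_step:
  assumes P: "poset_on X le" and F: "finite X" and C: "consistent X le \<omega>"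
    and cv: "covers X le a b"
  shows "rank X le \<omega> b = rank X le \<omega> a + eps \<omega> a b"
proof -
  have aX: "a \<in> X" and bX: "b \<in> X" using cv unfolding covers_def by auto
  obtain cs where cs: "max_chain X le a cs" using max_chain_ex[OF P F aX] by blast
  have cs2: "max_chain X le b (cs @ [b])" using max_chain_snoc[OF cs cv] .
  have ne: "cs \<noteq> []" and l: "last cs = a" using cs unfolding max_chain_def by auto
  show ?thesis using rank_eq[OF C aX cs] rank_eq[OF C bX cs2] chain_sum_snoc[OF ne, of \<omega> b] l
    by simp
qed

lemma abs_eps: "\<bar>eps \<omega> a b\<bar> = 1"
  unfolding eps_def by simp

lemma telescope:
  assumes "cs \<noteq> []"
    and "\<And>i. Suc i < length cs \<Longrightarrow> eps \<omega> (cs ! i) (cs ! Suc i) = f (cs ! Suc i) - f (cs ! i)"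
  shows "chain_sum \<omega> cs = f (last cs) - f (hd cs)"
proof -
  obtain m where m: "length cs = Suc m" using assms by (cases cs) auto
  have "chain_sum \<omega> cs = (\<Sum>i<m. f (cs ! Suc i) - f (cs ! i))"
    unfolding chain_sum_def using m assms(2) by (auto intro!: sum.cong)
  also have "\<dots> = f (cs ! m) - f (cs ! 0)"
    using sum_lessThan_telescope[of "\<lambda>i. f (cs ! i)" m] by simp
  finally show ?thesis using m assms(1) by (simp add: last_conv_nth hd_conv_nth)
qed

definition pos :: "'a list \<Rightarrow> 'a \<Rightarrow> nat" where
  "pos xs x = (THE i. i < length xs \<and> xs ! i = x)"

lemma pos_props:
  assumes "distinct xs" "x \<in> set xs"
  shows "pos xs x < length xs" "xs ! pos xs x = x"
  using theI'[OF distinct_Ex1[OF assms]] unfolding pos_def by auto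

lemma pos_nth:
  assumes "distinct xs" "i < length xs"
  shows "pos xs (xs ! i) = i"
  unfolding pos_def using assms by (auto intro!: the_equality simp: nth_eq_iff_index_eq)

lemma linext_pos:
  assumes L: "linear_extension X le xs" and P: "poset_on X le" and ab: "less_rel le a b"
  shows "pos xs a < pos xs b"
proof -
  have d: "distinct xs" and s: "set xs = X" using L unfolding linear_extension_def by auto
  have a: "a \<in> set xs" and b: "b \<in> set xs" using less_mem[OF P ab] s by auto
  show ?thesis using L pos_props[OF d a] pos_props[OF d b] ab unfolding linear_extension_def
    by metis
qed

definition RL :: "'a set \<Rightarrow> ('a \<Rightarrow> int) \<Rightarrow> 'a list \<Rightarrow> 'a \<Rightarrow> 'a \<Rightarrow> bool" where
  "RL X r xs x y \<longleftrightarrow> x \<in> X \<and> y \<in> X \<and> \<bar>r x - r y\<bar> = 1 \<and> pos xs x < pos xs y"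

definition QL :: "'a set \<Rightarrow> ('a \<Rightarrow> int) \<Rightarrow> 'a list \<Rightarrow> 'a \<Rightarrow> 'a \<Rightarrow> bool" where
  "QL X r xs x y \<longleftrightarrow> (x \<in> X \<and> x = y) \<or> (RL X r xs)\<^sup>+\<^sup>+ x y"

lemma RL_trancl:
  assumes "(RL X r xs)\<^sup>+\<^sup>+ x y"
  shows "pos xs x < pos xs y \<and> x \<in> X \<and> y \<in> X"
  using assms by (induction rule: tranclp_induct) (auto simp: RL_def)

lemma QL_good:
  assumes F: "finite X" and P: "poset_on X P" and C: "consistent X P \<omega>"
    and M: "\<forall>x\<in>X. \<forall>y\<in>X. rank X P \<omega> x < rank X P \<omega> y \<longrightarrow> \<omega> x < \<omega> y"
    and L: "linear_extension X P xs"
  defines "\<rho> \<equiv> rank X P \<omega>"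
  defines "Q \<equiv> QL X \<rho> xs"
  shows "poset_on X Q \<and> extends Q P \<and> saturated X Q \<omega> \<and> (\<forall>x\<in>X. rank X Q \<omega> x = \<rho> x)
     \<and> linear_extension X Q xs"
proof -
  let ?R = "RL X \<rho> xs"
  have d: "distinct xs" and s: "set xs = X" using L unfolding linear_extension_def by auto
  note tr = RL_trancl[of X \<rho> xs]
  have PQ: "poset_on X Q"
    unfolding poset_on_def Q_def QL_def
    apply (intro conjI)
    subgoal using tr by blast
    subgoal by simp
    subgoal using tr by (metis less_asym)
    subgoal by (meson tranclp_trans)
    done
  have lessQ: "less_rel Q x y \<longleftrightarrow> ?R\<^sup>+\<^sup>+ x y" for x y
    unfolding less_rel_def Q_def QL_def using tr by force
  have Pcov: "?R a b" if cv: "covers X P a b" for a b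
  proof -
    have "\<bar>\<rho> a - \<rho> b\<bar> = 1" using cover_step[OF P F C cv] abs_eps[of \<omega> a b] unfolding \<rho>_def
      by simp
    moreover have "pos xs a < pos xs b" using linext_pos[OF L P] cv unfolding covers_def by blast
    ultimately show ?thesis using cv unfolding RL_def covers_def by blast
  qed
  have extP: "?R\<^sup>+\<^sup>+ x y" if "less_rel P x y" for x y
    using tranclp_mono_imp[OF cover_trancl[OF P F refl that] Pcov] .
  have ext: "extends Q P" unfolding extends_def using extP lessQ by blast
  have Qcov: "?R a b" if cv: "covers X Q a b" for a b
  proof -
    have "?R\<^sup>+\<^sup>+ a b" using cv lessQ unfolding covers_def by blast
    then obtain c where c: "?R a c" "?R\<^sup>*\<^sup>* c b" using tranclpD by metis
    show ?thesis
    proof (cases "c = b")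
      case True then show ?thesis using c by simp
    next
      case False
      then have cb: "?R\<^sup>+\<^sup>+ c b" using c(2) by (meson rtranclpD)
      have ac: "?R\<^sup>+\<^sup>+ a c" using c(1) by blast
      have "c \<in> X" using c(1) unfolding RL_def by blast
      then show ?thesis using cv cb ac lessQ unfolding covers_def by blast
    qed
  qed
  have epsR: "eps \<omega> a b = \<rho> b - \<rho> a" if "?R a b" for a b
  proof -
    have ab: "a \<in> X" "b \<in> X" "\<bar>\<rho> a - \<rho> b\<bar> = 1" using that unfolding RL_def by auto
    show ?thesis
    proof (cases "\<rho> a < \<rho> b")
      case True
      then have "\<omega> a < \<omega> b" using M ab unfolding \<rho>_def by blast
      then show ?thesis using True ab(3) unfolding eps_def by auto
    next
      case False
      then have "\<rho> b < \<rho> a" using ab(3) by auto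
      then have "\<omega> b < \<omega> a" using M ab unfolding \<rho>_def by blast
      then show ?thesis using False ab(3) unfolding eps_def by auto
    qed
  qed
  have min0: "\<rho> m = 0" if m: "m \<in> X" "\<not> (\<exists>w\<in>X. less_rel Q w m)" for m
  proof -
    have "\<not> (\<exists>w\<in>X. less_rel P w m)" using m ext unfolding extends_def by blast
    then have "max_chain X P m [m]" using m unfolding max_chain_def by auto
    then show ?thesis using rank_eq[OF C m(1)] unfolding \<rho>_def chain_sum_def by simp
  qed
  have sumQ: "chain_sum \<omega> cs = \<rho> z" if mc: "max_chain X Q z cs" for z cs
  proof -
    have ne: "cs \<noteq> []" and l: "last cs = z" and h: "hd cs \<in> X" "\<not> (\<exists>w\<in>X. less_rel Q w (hd cs))"
      using mc unfolding max_chain_def by auto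
    have "chain_sum \<omega> cs = \<rho> (last cs) - \<rho> (hd cs)"
    proof (rule telescope[OF ne])
      fix i assume "Suc i < length cs"
      then have "covers X Q (cs ! i) (cs ! Suc i)" using mc unfolding max_chain_def by blast
      then show "eps \<omega> (cs ! i) (cs ! Suc i) = \<rho> (cs ! Suc i) - \<rho> (cs ! i)"
        using Qcov epsR by blast
    qed
    then show ?thesis using min0[OF h] l by simp
  qed
  have consQ: "consistent X Q \<omega>" unfolding consistent_def using sumQ by metis
  have rankQ: "rank X Q \<omega> z = \<rho> z" if zX: "z \<in> X" for z
  proof -
    obtain cs where "max_chain X Q z cs" using max_chain_ex[OF PQ F zX] by blast
    then show ?thesis using rank_eq[OF consQ zX] sumQ by simp
  qed
  have sat: "saturated X Q \<omega>" unfolding saturated_def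
  proof (intro conjI consQ ballI impI)
    fix x y assume xy: "x \<in> X" "y \<in> X" "\<bar>rank X Q \<omega> x - rank X Q \<omega> y\<bar> = 1"
    then have r: "\<bar>\<rho> x - \<rho> y\<bar> = 1" using rankQ by simp
    then have "x \<noteq> y" by auto
    then have "pos xs x \<noteq> pos xs y" using pos_props[OF d] xy s by metis
    then have "?R x y \<or> ?R y x" using r xy unfolding RL_def by auto
    then show "Q x y \<or> Q y x" unfolding Q_def QL_def by blast
  qed
  have le: "linear_extension X Q xs" unfolding linear_extension_def
  proof (intro conjI d s allI impI)
    fix i j assume ij: "i < length xs \<and> j < length xs \<and> less_rel Q (xs ! i) (xs ! j)"
    then have "pos xs (xs ! i) < pos xs (xs ! j)" using lessQ tr by blast
    then show "i < j" using pos_nth[OF d] ij by simp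
  qed
  show ?thesis using PQ ext sat rankQ le by blast
qed

lemma Q_unique:
  assumes F: "finite X" and P: "poset_on X P"
    and Qp: "poset_on X Q" and Sat: "saturated X Q \<omega>"
    and Rk: "\<forall>x\<in>X. rank X Q \<omega> x = rank X P \<omega> x" and L: "linear_extension X Q xs"
  shows "Q = QL X (rank X P \<omega>) xs"
proof (intro ext iffI)
  let ?R = "RL X (rank X P \<omega>) xs"
  have C: "consistent X Q \<omega>" using Sat unfolding saturated_def by blast
  fix x y
  {
    assume q: "Q x y"
    show "QL X (rank X P \<omega>) xs x y"
    proof (cases "x = y")
      case True then show ?thesis using q Qp unfolding QL_def poset_on_def by blast
    next
      case False
      then have "less_rel Q x y" using q unfolding less_rel_def by blast
      then have cv: "(covers X Q)\<^sup>+\<^sup>+ x y" using cover_trancl[OF Qp F refl] by blast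
      have "?R a b" if c: "covers X Q a b" for a b
      proof -
        have ab: "a \<in> X" "b \<in> X" using c unfolding covers_def by auto
        have "\<bar>rank X P \<omega> a - rank X P \<omega> b\<bar> = 1"
          using cover_step[OF Qp F C c] abs_eps[of \<omega> a b] Rk ab by simp
        moreover have "pos xs a < pos xs b" using linext_pos[OF L Qp] c unfolding covers_def by blast
        ultimately show ?thesis using ab unfolding RL_def by blast
      qed
      then show ?thesis using tranclp_mono_imp[OF cv] unfolding QL_def by blast
    qed
  }
  {
    assume q: "QL X (rank X P \<omega>) xs x y"
    have step: "Q a b" if r: "?R a b" for a b
    proof -
      have ab: "a \<in> X" "b \<in> X" "\<bar>rank X P \<omega> a - rank X P \<omega> b\<bar> = 1" "pos xs a < pos xs b"
        using r unfolding RL_def by auto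
      then have "Q a b \<or> Q b a" using Sat Rk unfolding saturated_def by simp
      moreover have "\<not> less_rel Q b a" using linext_pos[OF L Qp, of b a] ab(4) by auto
      moreover have "a \<noteq> b" using ab(4) by auto
      ultimately show ?thesis unfolding less_rel_def by blast
    qed
    show "Q x y"
    proof (cases "x \<in> X \<and> x = y")
      case True then show ?thesis using Qp unfolding poset_on_def by blast
    next
      case False
      then have "?R\<^sup>+\<^sup>+ x y" using q unfolding QL_def by blast
      then show ?thesis
      proof (induction rule: tranclp_induct)
        case (base y) then show ?case using step by blast
      next
        case (step y z) then show ?case using Qp \<open>?R y z \<Longrightarrow> Q y z\<close> unfolding poset_on_def
          by blast
      qed
    qed
  }
qed

theorem theorem3p2:
  fixes X :: "'a set" and P :: "'a \<Rightarrow> 'a \<Rightarrow> bool" and \<omega> :: "'a \<Rightarrow> nat"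
  assumes "finite X"
    and "poset_on X P"
    and "bij_betw \<omega> X {1..card X}"
    and "consistent X P \<omega>"
    and "\<forall>x\<in>X. \<forall>y\<in>X. rank X P \<omega> x < rank X P \<omega> y \<longrightarrow> \<omega> x < \<omega> y"
  defines "S \<equiv> {Q. poset_on X Q \<and> extends Q P \<and> saturated X Q \<omega> \<and>
                    (\<forall>x\<in>X. rank X Q \<omega> x = rank X P \<omega> x)}"
  shows "jordan_hoelder X P \<omega> = (\<Union>Q\<in>S. jordan_hoelder X Q \<omega>)
     \<and> (\<forall>Q1\<in>S. \<forall>Q2\<in>S. Q1 \<noteq> Q2 \<longrightarrow> jordan_hoelder X Q1 \<omega> \<inter> jordan_hoelder X Q2 \<omega> = {})"
proof (intro conjI)
  note F = assms(1) and P = assms(2) and B = assms(3) and C = assms(4) and M = assms(5)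
  have le_P: "linear_extension X P xs" if "linear_extension X Q xs" "extends Q P" for Q xs
    using that unfolding linear_extension_def extends_def by blast
  show "jordan_hoelder X P \<omega> = (\<Union>Q\<in>S. jordan_hoelder X Q \<omega>)"
  proof
    show "jordan_hoelder X P \<omega> \<subseteq> (\<Union>Q\<in>S. jordan_hoelder X Q \<omega>)"
    proof
      fix w assume "w \<in> jordan_hoelder X P \<omega>"
      then obtain xs where w: "w = map \<omega> xs" and L: "linear_extension X P xs"
        unfolding jordan_hoelder_def by blast
      have g: "poset_on X (QL X (rank X P \<omega>) xs) \<and> extends (QL X (rank X P \<omega>) xs) P \<and>
        saturated X (QL X (rank X P \<omega>) xs) \<omega> \<and>
        (\<forall>x\<in>X. rank X (QL X (rank X P \<omega>) xs) \<omega> x = rank X P \<omega> x) \<and>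
        linear_extension X (QL X (rank X P \<omega>) xs) xs"
        using QL_good[OF F P C M L] by blast
      then have "QL X (rank X P \<omega>) xs \<in> S" unfolding S_def by blast
      moreover have "w \<in> jordan_hoelder X (QL X (rank X P \<omega>) xs) \<omega>"
        using g w unfolding jordan_hoelder_def by blast
      ultimately show "w \<in> (\<Union>Q\<in>S. jordan_hoelder X Q \<omega>)" by blast
    qed
  next
    show "(\<Union>Q\<in>S. jordan_hoelder X Q \<omega>) \<subseteq> jordan_hoelder X P \<omega>"
      unfolding S_def jordan_hoelder_def using le_P by blast
  qed
  show "\<forall>Q1\<in>S. \<forall>Q2\<in>S. Q1 \<noteq> Q2 \<longrightarrow> jordan_hoelder X Q1 \<omega> \<inter> jordan_hoelder X Q2 \<omega> = {}"
  proof (intro ballI impI)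
    fix Q1 Q2 assume Q1: "Q1 \<in> S" and Q2: "Q2 \<in> S" and ne: "Q1 \<noteq> Q2"
    show "jordan_hoelder X Q1 \<omega> \<inter> jordan_hoelder X Q2 \<omega> = {}"
    proof (rule ccontr)
      assume "jordan_hoelder X Q1 \<omega> \<inter> jordan_hoelder X Q2 \<omega> \<noteq> {}"
      then obtain xs1 xs2 where m: "map \<omega> xs1 = map \<omega> xs2"
        and L1: "linear_extension X Q1 xs1" and L2: "linear_extension X Q2 xs2"
        unfolding jordan_hoelder_def by blast
      have s: "set xs1 = X" "set xs2 = X" using L1 L2 unfolding linear_extension_def by auto
      have "inj_on \<omega> X" using B bij_betw_def by blast
      then have "xs1 = xs2" using m s inj_on_map_eq_map[of \<omega> xs1 xs2] by simp
      then have "Q1 = Q2"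
        using Q_unique[OF F P _ _ _ L1, of \<omega>] Q_unique[OF F P _ _ _ L2, of \<omega>] Q1 Q2 unfolding S_def by auto
      then show False using ne by blast
    qed
  qed
qed

end
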